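(* Let $A\in\mathcal A_n$ with Kupisch series $[c_0,\dots,c_{n-1}]$. Then the directed graph $\tau(A)$ is a tree rooted at the vertex $n$.
   Context: $K$ is an algebraically closed field. $\mathcal A_n$ is the set of ordered products $A=A_1\times\cdots\times A_k$ of connected linear Nakayama algebras with $n$ simple modules in total (the order of factors matters). The Kupisch series of $A$ is the concatenation of the Kupisch series of $A_1,\dots,A_k$, where a connected linear Nakayama algebra with $m$ simple modules has Kupisch series $[c_0,\dots,c_{m-1}]$, $c_i=\dim e_iA$, characterized by $c_{i+1}+1\ge c_i\ge2$ for $0\le i<m-1$ and $c_{m-1}=1$. $\tau(A)$ is the directed graph with vertex set $\{0,\dots,n\}$ and an edge $i+c_i\to i$ for each $0\le i<n$. *)

theory Defs
  imports Main
begin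

definition kupisch_conn :: "nat list \<Rightarrow> bool" where
  "kupisch_conn cs \<longleftrightarrow> cs \<noteq> [] \<and> last cs = 1 \<and>
     (\<forall>i. Suc i < length cs \<longrightarrow> cs ! (Suc i) + 1 \<ge> cs ! i \<and> cs ! i \<ge> 2)"

text \<open>An element of A_n, an ordered product A_1 x ... x A_k of connected linear Nakayama
  algebras with n simples in total, represented (up to isomorphism) by the ordered list of
  the Kupisch series of its factors.\<close>
definition algs_A :: "nat \<Rightarrow> nat list list set" where
  "algs_A n = {As. (\<forall>a\<in>set As. kupisch_conn a) \<and> sum_list (map length As) = n}"

definition kupisch_series :: "nat list list \<Rightarrow> nat list" where
  "kupisch_series As = concat As"

definition tau_vertices :: "nat \<Rightarrow> nat set" where
  "tau_vertices n = {0..n}"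

definition tau_edges :: "nat \<Rightarrow> nat list \<Rightarrow> (nat \<times> nat) set" where
  "tau_edges n c = {(i + c ! i, i) | i. i < n}"

definition dwalk :: "('a \<times> 'a) set \<Rightarrow> 'a list \<Rightarrow> bool" where
  "dwalk E p \<longleftrightarrow> p \<noteq> [] \<and> (\<forall>i. Suc i < length p \<longrightarrow> (p ! i, p ! Suc i) \<in> E)"

definition rooted_tree :: "'a set \<Rightarrow> ('a \<times> 'a) set \<Rightarrow> 'a \<Rightarrow> bool" where
  "rooted_tree V E r \<longleftrightarrow> E \<subseteq> V \<times> V \<and> r \<in> V \<and>
     (\<forall>v\<in>V. \<exists>!p. dwalk E p \<and> hd p = r \<and> last p = v)"

end

theory Submission
  imports Defs
begin

lemma kup_bound:
  assumes "kupisch_conn a"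
  shows "\<forall>j<length a. 1 \<le> a!j \<and> j + a!j \<le> length a"
proof -
  let ?m = "length a"
  from assms have ne: "a \<noteq> []" and l: "last a = 1"
    and st: "\<And>i. Suc i < ?m \<Longrightarrow> a!(Suc i) + 1 \<ge> a!i \<and> a!i \<ge> 2"
    unfolding kupisch_conn_def by auto
  have "\<And>j. j + d = ?m - 1 \<Longrightarrow> j < ?m \<Longrightarrow> 1 \<le> a!j \<and> j + a!j \<le> ?m" for d
  proof (induction d)
    case 0
    then have jm: "j = ?m - 1" by simp
    then have "a!j = 1" using l ne by (simp add: last_conv_nth)
    then show ?case using jm 0 by simp
  next
    case (Suc d)
    show ?case
    proof (cases "Suc j < ?m")
      case True
      have "Suc j + d = ?m - 1" using Suc.prems True by linarith
      then have "1 \<le> a!Suc j \<and> Suc j + a!Suc j \<le> ?m" using Suc.IH[OF _ True] by simp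
      then show ?thesis using st[OF True] by simp
    next
      case False
      then show ?thesis using Suc.prems by simp
    qed
  qed
  note H = this
  show ?thesis
  proof (intro allI impI)
    fix j assume "j < ?m"
    then show "1 \<le> a!j \<and> j + a!j \<le> ?m" using H[of j "?m - 1 - j"] by simp
  qed
qed

lemma concat_bound:
  assumes "\<forall>a\<in>set As. kupisch_conn a"
  shows "\<forall>i<length (concat As). 1 \<le> concat As!i \<and> i + concat As!i \<le> length (concat As)"
  using assms
proof (induction As)
  case Nil
  then show ?case by simp
next
  case (Cons a As)
  have k: "\<forall>j<length a. 1 \<le> a!j \<and> j + a!j \<le> length a"
    using kup_bound Cons.prems by simp
  have ih: "\<forall>i<length (concat As). 1 \<le> concat As!i \<and> i + concat As!i \<le> length (concat As)"
    using Cons by simp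
  show ?case
  proof (intro allI impI)
    fix i assume i: "i < length (concat (a#As))"
    show "1 \<le> concat (a#As)!i \<and> i + concat (a#As)!i \<le> length (concat (a#As))"
    proof (cases "i < length a")
      case True
      then show ?thesis using k by (auto simp: nth_append)
    next
      case False
      then have "i - length a < length (concat As)" using i by simp
      then show ?thesis using ih False by (auto simp: nth_append)
    qed
  qed
qed

lemma tree_gen:
  fixes f :: "nat \<Rightarrow> nat"
  assumes f: "\<And>i. i < n \<Longrightarrow> i < f i \<and> f i \<le> n"
  shows "rooted_tree {0..n} {(f i, i) | i. i < n} n"
proof -
  let ?E = "{(f i, i) | i. i < n}"
  have ex: "\<exists>p. dwalk ?E p \<and> hd p = n \<and> last p = v" if "v \<le> n" for v
    using that
  proof (induction "n - v" arbitrary: v rule: less_induct)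
    case less
    show ?case
    proof (cases "v = n")
      case True
      then show ?thesis by (intro exI[of _ "[n]"]) (simp add: dwalk_def)
    next
      case False
      then have vn: "v < n" using less by simp
      then have "n - f v < n - v" "f v \<le> n" using f[OF vn] by auto
      then obtain p where p: "dwalk ?E p" "hd p = n" "last p = f v" using less by blast
      have "dwalk ?E (p @ [v])"
        unfolding dwalk_def
      proof (intro conjI allI impI)
        fix i assume i: "Suc i < length (p @ [v])"
        show "((p @ [v]) ! i, (p @ [v]) ! Suc i) \<in> ?E"
        proof (cases "Suc i < length p")
          case True
          then show ?thesis using p(1) unfolding dwalk_def by (simp add: nth_append)
        next
          case False
          then have "Suc i = length p" using i by simp
          then have "i = length p - 1" by simp
          then have "(p @ [v]) ! i = last p" "(p @ [v]) ! Suc i = v"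
            using p(1) \<open>Suc i = length p\<close> unfolding dwalk_def by (auto simp: nth_append last_conv_nth)
          then show ?thesis using p(3) vn by auto
        qed
      qed simp
      moreover have "hd (p @ [v]) = n" using p unfolding dwalk_def by simp
      ultimately show ?thesis by (intro exI[of _ "p @ [v]"]) simp
    qed
  qed
  have lastedge: "dwalk ?E (p @ [x]) \<Longrightarrow> p \<noteq> [] \<Longrightarrow> (last p, x) \<in> ?E \<and> dwalk ?E p" for p x
  proof -
    assume d: "dwalk ?E (p @ [x])" and ne: "p \<noteq> []"
    have "(p @ [x]) ! (length p - 1) = last p" using ne by (simp add: nth_append last_conv_nth)
    moreover have s: "Suc (length p - 1) < length (p @ [x])" using ne by simp
    moreover have "Suc (length p - 1) = length p" using ne by simp
    moreover have "((p @ [x]) ! (length p - 1), (p @ [x]) ! Suc (length p - 1)) \<in> ?E"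
      using d s unfolding dwalk_def by blast
    ultimately have "(last p, (p @ [x]) ! length p) \<in> ?E" by simp
    moreover have "dwalk ?E p" unfolding dwalk_def
    proof (intro conjI allI impI)
      show "p \<noteq> []" by (fact ne)
      fix i assume i: "Suc i < length p"
      then have "Suc i < length (p @ [x])" by simp
      then have "((p @ [x]) ! i, (p @ [x]) ! Suc i) \<in> ?E" using d unfolding dwalk_def by blast
      moreover have "(p @ [x]) ! i = p ! i" "(p @ [x]) ! Suc i = p ! Suc i"
        using i by (simp_all add: nth_append)
      ultimately show "(p ! i, p ! Suc i) \<in> ?E" by simp
    qed
    ultimately show ?thesis by simp
  qed
  have uniq: "\<And>q. dwalk ?E p \<Longrightarrow> hd p = n \<Longrightarrow> dwalk ?E q \<Longrightarrow> hd q = n \<Longrightarrow> last q = last p \<Longrightarrow> q = p" for p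
  proof (induction p rule: rev_induct)
    case Nil
    then show ?case by (simp add: dwalk_def)
  next
    case (snoc x p)
    obtain q' y where q: "q = q' @ [y]" using snoc.prems(3) unfolding dwalk_def
      by (metis rev_exhaust)
    have y: "y = x" using snoc.prems q by simp
    show ?case
    proof (cases "p = []")
      case True
      then have xn: "x = n" using snoc.prems by simp
      show ?thesis
      proof (cases "q' = []")
        case True then show ?thesis using q y \<open>p = []\<close> by simp
      next
        case False
        have "dwalk ?E (q' @ [x])" using snoc.prems(3) q y by simp
        then have "(last q', x) \<in> ?E" using lastedge[OF _ False] by blast
        then show ?thesis using xn by auto
      qed
    next
      case False
      have e1: "(last p, x) \<in> ?E" "dwalk ?E p" using lastedge[OF snoc.prems(1) False] by auto
      then have xn: "x < n" "last p = f x" by auto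
      show ?thesis
      proof (cases "q' = []")
        case True then show ?thesis using q y snoc.prems xn by simp
      next
        case False
        have "dwalk ?E (q' @ [x])" using snoc.prems(3) q y by simp
        then have e2: "(last q', x) \<in> ?E" "dwalk ?E q'" using lastedge[OF _ False] by auto
        then have "last q' = f x" by auto
        moreover have h1: "hd q' = n" using snoc.prems(4) q False by simp
        moreover have h2: "hd p = n" using snoc.prems(2) \<open>p \<noteq> []\<close> by simp
        ultimately have "last q' = last p" using xn by simp
        then have "q' = p" by (rule snoc.IH[OF e1(2) h2 e2(2) h1])
        then show ?thesis using q y by simp
      qed
    qed
  qed
  show ?thesis
    unfolding rooted_tree_def
  proof (intro conjI ballI)
    show "?E \<subseteq> {0..n} \<times> {0..n}" using f by fastforce
    show "n \<in> {0..n}" by simp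
    fix v assume "v \<in> {0..n}"
    then obtain p where p: "dwalk ?E p" "hd p = n" "last p = v" using ex by auto
    show "\<exists>!p. dwalk ?E p \<and> hd p = n \<and> last p = v"
    proof (rule ex1I[of _ p])
      show "dwalk ?E p \<and> hd p = n \<and> last p = v" using p by simp
      fix q assume "dwalk ?E q \<and> hd q = n \<and> last q = v"
      then show "q = p" using uniq[OF p(1) p(2)] p(3) by simp
    qed
  qed
qed

theorem lemma3p1:
  fixes n :: nat and A :: "nat list list"
  assumes "A \<in> algs_A n"
  shows "rooted_tree (tau_vertices n) (tau_edges n (kupisch_series A)) n"
proof -
  let ?c = "concat A"
  have len: "length ?c = n" using assms by (simp add: algs_A_def length_concat)
  have b: "\<forall>i<n. 1 \<le> ?c!i \<and> i + ?c!i \<le> n"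
    using concat_bound[of A] assms len by (simp add: algs_A_def)
  have "rooted_tree {0..n} {((\<lambda>i. i + ?c!i) i, i) | i. i < n} n"
    by (rule tree_gen) (use b in auto)
  then show ?thesis by (simp add: tau_vertices_def tau_edges_def kupisch_series_def)
qed

end
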